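(* Let $\mathbf{T}=(T_1,\dots,T_m)$ and $\mathbf{T}^0=(T^0_1,\dots,T^0_m)$ be real random vectors and $\mathcal{H}_0\subset[m]$ such that for every $i\in\mathcal{H}_0$, $(T_i,T_i^0\mid\mathbf{T}_{-i},\mathbf{T}^0_{-i})\stackrel{d}{=}(T_i^0,T_i\mid\mathbf{T}_{-i},\mathbf{T}^0_{-i})$. Define $g(t)=\hat f_0(t)/\hat f_{mix}(t)$, where $$\hat f_{mix}(t)=\frac{1}{2m}\sum_{i=1}^m\big[K_{h_{mix}}(t-T_i)+K_{h_{mix}}(t-T_i^0)\big],$$ $K_h(t)=h^{-1}K(t/h)$ for a symmetric kernel $K$ with $\int K=1$, $\int tK(t)dt=0$, $\int t^2K(t)dt<\infty$, and the bandwidth $h_{mix}=h_{mix}(\mathbf{T},\mathbf{T}^0)$ is invariant under every permutation of the $2m$ entries of $(T_1,\dots,T_m,T^0_1,\dots,T^0_m)$; and $\hat f_0$ is one of the following two estimators: (KN) with $\tilde T_i^0=T_i$ if $|T_i|\le|T_i^0|$ and $\tilde T_i^0=T_i^0$ otherwise, $\hat f_0(t)=\frac{1}{2m}\big[\sum_{i=1}^mK_{h_0}(t-\tilde T^0_i)+\sum_{i=1}^mK_{h_0}(t+\tilde T^0_i)\big]$, where $h_0$ is a function of $(\tilde{\mathbf{T}}^0,-\tilde{\mathbf{T}}^0)$ invariant under permutations of its $2m$ entries; (JC) with $(X_1,\dots,X_{2m})=(T_1,\dots,T_m,T^0_1,\dots,T^0_m)$, $\varphi_{2m}(s)=\frac1{2m}\sum_{j=1}^{2m}e^{\mathrm{i}sX_j}$,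 a fixed $\gamma\in(0,1/2)$, $\hat s=\inf\{s\in[0,\log(2m)]:|\varphi_{2m}(s)|=(2m)^{-\gamma}\}$, $\hat\sigma_0^2=-\frac{\frac{d}{ds}|\varphi_{2m}(s)|}{s|\varphi_{2m}(s)|}\big|_{s=\hat s}$, $\hat\mu_0=\frac{\mathrm{Re}(\varphi_{2m}(s))\mathrm{Im}(\varphi_{2m}'(s))-\mathrm{Re}(\varphi_{2m}'(s))\mathrm{Im}(\varphi_{2m}(s))}{|\varphi_{2m}(s)|^2}\big|_{s=\hat s}$, and $\hat f_0(t)=\phi_{\hat\sigma_0}(t-\hat\mu_0)$, the $\mathcal N(\hat\mu_0,\hat\sigma_0^2)$ density. Then $U_i=g(T_i)$ and $U_i^0=g(T_i^0)$ satisfy, for every $i\in\mathcal{H}_0$, $$(U_i,U_i^0\mid\mathbf{U}_{-i},\mathbf{U}^0_{-i})\stackrel{d}{=}(U_i^0,U_i\mid\mathbf{U}_{-i},\mathbf{U}^0_{-i}).$$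
   Context: $\mathbf{a}_{-i}$ denotes a vector with its $i$-th entry removed. In the paper $(\mathbf{T},\mathbf{T}^0)$ are the test and calibration samples produced by its one- or two-sample construction, which satisfy the stated null pairwise exchangeability. *)

theory Defs
  imports "HOL-Probability.Probability"
begin

text \<open>Data: the pair (T, T0) of random vectors indexed by the finite type 'm, so m = CARD('m).\<close>

datatype est = KN | JC

definition swap_at :: "'m \<Rightarrow> ((real^'m) \<times> (real^'m)) \<Rightarrow> ((real^'m) \<times> (real^'m))" where
  "swap_at i z = ((\<chi> j. if j = i then snd z $ j else fst z $ j),
                  (\<chi> j. if j = i then fst z $ j else snd z $ j))"

text \<open>The 2m entries of a pair of vectors, indexed by 'm \<times> bool (True: first vector).\<close>
definition entries :: "((real^'m) \<times> (real^'m)) \<Rightarrow> ('m \<times> bool \<Rightarrow> real)" where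
  "entries z = (\<lambda>(j, b). if b then fst z $ j else snd z $ j)"

definition of_entries :: "('m \<times> bool \<Rightarrow> real) \<Rightarrow> ((real^'m) \<times> (real^'m))" where
  "of_entries f = ((\<chi> j. f (j, True)), (\<chi> j. f (j, False)))"

definition perm_invariant :: "(((real^'m) \<times> (real^'m)) \<Rightarrow> real) \<Rightarrow> bool" where
  "perm_invariant h \<longleftrightarrow>
     (\<forall>p z. p permutes (UNIV :: ('m \<times> bool) set) \<longrightarrow> h (of_entries (entries z \<circ> p)) = h z)"

definition Kh :: "(real \<Rightarrow> real) \<Rightarrow> real \<Rightarrow> real \<Rightarrow> real" where
  "Kh K h t = inverse h * K (t / h)"

definition fmix_hat :: "(real \<Rightarrow> real) \<Rightarrow> (((real^'m) \<times> (real^'m)) \<Rightarrow> real)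
    \<Rightarrow> ((real^'m) \<times> (real^'m)) \<Rightarrow> real \<Rightarrow> real" where
  "fmix_hat K hmix z t =
     1 / (2 * real CARD('m)) *
     (\<Sum>i\<in>UNIV. Kh K (hmix z) (t - fst z $ i) + Kh K (hmix z) (t - snd z $ i))"

definition Ttilde0 :: "((real^'m) \<times> (real^'m)) \<Rightarrow> real^'m" where
  "Ttilde0 z = (\<chi> i. if \<bar>fst z $ i\<bar> \<le> \<bar>snd z $ i\<bar> then fst z $ i else snd z $ i)"

definition f0_KN :: "(real \<Rightarrow> real) \<Rightarrow> (((real^'m) \<times> (real^'m)) \<Rightarrow> real)
    \<Rightarrow> ((real^'m) \<times> (real^'m)) \<Rightarrow> real \<Rightarrow> real" where
  "f0_KN K h0 z t =
     (let tt = Ttilde0 z; h = h0 (tt, - tt) in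
       1 / (2 * real CARD('m)) *
       ((\<Sum>i\<in>UNIV. Kh K h (t - tt $ i)) + (\<Sum>i\<in>UNIV. Kh K h (t + tt $ i))))"

definition phi_emp :: "((real^'m) \<times> (real^'m)) \<Rightarrow> real \<Rightarrow> complex" where
  "phi_emp z s = 1 / (2 * of_nat CARD('m)) *
     (\<Sum>i\<in>UNIV. exp (\<i> * of_real (s * fst z $ i)) + exp (\<i> * of_real (s * snd z $ i)))"

definition s_hat :: "real \<Rightarrow> ((real^'m) \<times> (real^'m)) \<Rightarrow> real" where
  "s_hat \<gamma> z = Inf {s \<in> {0 .. ln (2 * real CARD('m))}.
                     cmod (phi_emp z s) = (2 * real CARD('m)) powr (- \<gamma>)}"

definition sigma2_hat :: "real \<Rightarrow> ((real^'m) \<times> (real^'m)) \<Rightarrow> real" where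
  "sigma2_hat \<gamma> z = (let s = s_hat \<gamma> z in
     - deriv (\<lambda>u. cmod (phi_emp z u)) s / (s * cmod (phi_emp z s)))"

definition mu_hat :: "real \<Rightarrow> ((real^'m) \<times> (real^'m)) \<Rightarrow> real" where
  "mu_hat \<gamma> z = (let s = s_hat \<gamma> z; p = phi_emp z s;
                       p' = vector_derivative (phi_emp z) (at s) in
     (Re p * Im p' - Re p' * Im p) / (cmod p)\<^sup>2)"

definition f0_JC :: "real \<Rightarrow> ((real^'m) \<times> (real^'m)) \<Rightarrow> real \<Rightarrow> real" where
  "f0_JC \<gamma> z t = normal_density (mu_hat \<gamma> z) (sqrt (sigma2_hat \<gamma> z)) t"

definition f0_hat :: "est \<Rightarrow> (real \<Rightarrow> real) \<Rightarrow> (((real^'m) \<times> (real^'m)) \<Rightarrow> real) \<Rightarrow> real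
    \<Rightarrow> ((real^'m) \<times> (real^'m)) \<Rightarrow> real \<Rightarrow> real" where
  "f0_hat e K h0 \<gamma> z t = (case e of KN \<Rightarrow> f0_KN K h0 z t | JC \<Rightarrow> f0_JC \<gamma> z t)"

definition g_hat :: "est \<Rightarrow> (real \<Rightarrow> real) \<Rightarrow> (((real^'m) \<times> (real^'m)) \<Rightarrow> real)
    \<Rightarrow> (((real^'m) \<times> (real^'m)) \<Rightarrow> real) \<Rightarrow> real \<Rightarrow> ((real^'m) \<times> (real^'m)) \<Rightarrow> real \<Rightarrow> real" where
  "g_hat e K hmix h0 \<gamma> z t = f0_hat e K h0 \<gamma> z t / fmix_hat K hmix z t"

definition UU :: "est \<Rightarrow> (real \<Rightarrow> real) \<Rightarrow> (((real^'m) \<times> (real^'m)) \<Rightarrow> real)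
    \<Rightarrow> (((real^'m) \<times> (real^'m)) \<Rightarrow> real) \<Rightarrow> real \<Rightarrow> ((real^'m) \<times> (real^'m)) \<Rightarrow> ((real^'m) \<times> (real^'m))" where
  "UU e K hmix h0 \<gamma> z =
     ((\<chi> j. g_hat e K hmix h0 \<gamma> z (fst z $ j)), (\<chi> j. g_hat e K hmix h0 \<gamma> z (snd z $ j)))"

end

theory Submission imports Defs begin

lemma mult0fun: "((*) (0::real)) = (\<lambda>h. 0)" by auto

lemma fst_borel: "(fst :: 'a::topological_space \<times> 'b::topological_space \<Rightarrow> 'a) \<in> borel_measurable borel"
  by (rule borel_measurable_continuous_onI) (simp add: continuous_on_fst continuous_on_snd continuous_on_id)

lemma snd_borel: "(snd :: 'a::topological_space \<times> 'b::topological_space \<Rightarrow> 'b) \<in> borel_measurable borel"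
  by (rule borel_measurable_continuous_onI) (simp add: continuous_on_fst continuous_on_snd continuous_on_id)

definition DC :: "complex \<Rightarrow> complex \<Rightarrow> real" where
  "DC p p' = (if p \<noteq> 0 then p' \<bullet> sgn p else if p' = 0 then 0 else (SOME D. False))"

lemma deriv_cmod:
  fixes f :: "real \<Rightarrow> complex"
  assumes f: "(f has_vector_derivative f') (at s)"
  shows "deriv (\<lambda>u. cmod (f u)) s = DC (f s) f'"
proof (cases "f s = 0")
  case False
  have fd: "(f has_derivative (\<lambda>h. h *\<^sub>R f')) (at s)"
    using f by (simp add: has_vector_derivative_def)
  have "((\<lambda>u. norm (f u)) has_derivative (\<lambda>h. (h *\<^sub>R f') \<bullet> sgn (f s))) (at s)"
    using has_derivative_compose[OF fd has_derivative_norm[OF False]] by simp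
  moreover have "(\<lambda>h. (h *\<^sub>R f') \<bullet> sgn (f s)) = (*) (f' \<bullet> sgn (f s))"
    by (rule ext) simp
  ultimately have "((\<lambda>u. cmod (f u)) has_field_derivative (f' \<bullet> sgn (f s))) (at s)"
    by (simp add: has_field_derivative_def)
  then show ?thesis using False by (simp add: DC_def DERIV_imp_deriv)
next
  case True
  have fd: "(f has_derivative (\<lambda>h. h *\<^sub>R f')) (at s)"
    using f by (simp add: has_vector_derivative_def)
  have D0: "D = 0" if "((\<lambda>u. cmod (f u)) has_field_derivative D) (at s)" for D
    using DERIV_local_min[OF that, of 1] True by simp
  have lim1: "((\<lambda>y. norm (f y - (y - s) *\<^sub>R f') / norm (y - s)) \<longlongrightarrow> 0) (at s)"
    using fd[unfolded has_derivative_iff_norm] True by simp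
  show ?thesis
  proof (cases "f' = 0")
    case True': True
    have "((\<lambda>u. cmod (f u)) has_derivative (\<lambda>h. 0)) (at s)"
      unfolding has_derivative_iff_norm using lim1 True True' by simp
    then have "((\<lambda>u. cmod (f u)) has_field_derivative 0) (at s)"
      by (simp add: has_field_derivative_def mult0fun)
    then show ?thesis using True True' by (simp add: DC_def DERIV_imp_deriv)
  next
    case False': False
    have nd: "\<not> ((\<lambda>u. cmod (f u)) has_field_derivative D) (at s)" for D
    proof
      assume d: "((\<lambda>u. cmod (f u)) has_field_derivative D) (at s)"
      then have "D = 0" by (rule D0)
      with d have "((\<lambda>u. cmod (f u)) has_derivative (\<lambda>h. 0)) (at s)"
        by (simp add: has_field_derivative_def mult0fun)
      then have lim2: "((\<lambda>y. norm (f y) / norm (y - s)) \<longlongrightarrow> 0) (at s)"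
        unfolding has_derivative_iff_norm using True by simp
      have lim3: "((\<lambda>y. norm (f y) / norm (y - s) + norm (f y - (y - s) *\<^sub>R f') / norm (y - s)) \<longlongrightarrow> 0) (at s)"
        using tendsto_add[OF lim2 lim1] by simp
      have pt: "y \<noteq> s \<longrightarrow> norm f' \<le> norm (f y) / norm (y - s) + norm (f y - (y - s) *\<^sub>R f') / norm (y - s)" for y
      proof
        assume ys: "y \<noteq> s"
        have pos: "norm (y - s) > 0" using ys by simp
        have "norm ((y - s) *\<^sub>R f') \<le> norm (f y) + norm (f y - (y - s) *\<^sub>R f')"
          using norm_triangle_ineq4[of "f y" "f y - (y - s) *\<^sub>R f'"] by simp
        then have "norm ((y - s) *\<^sub>R f') / norm (y - s) \<le> (norm (f y) + norm (f y - (y - s) *\<^sub>R f')) / norm (y - s)"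
          using pos by (intro divide_right_mono) auto
        moreover have "norm ((y - s) *\<^sub>R f') / norm (y - s) = norm f'"
          using pos by simp
        ultimately show "norm f' \<le> norm (f y) / norm (y - s) + norm (f y - (y - s) *\<^sub>R f') / norm (y - s)"
          by (simp add: add_divide_distrib)
      qed
      have ev: "\<forall>\<^sub>F y in at s. norm f' \<le> norm (f y) / norm (y - s) + norm (f y - (y - s) *\<^sub>R f') / norm (y - s)"
        unfolding eventually_at_filter by (rule always_eventually) (use pt in simp)
      have "norm f' \<le> 0"
        by (rule tendsto_le[OF _ lim3 tendsto_const ev]) simp
      with False' show False by simp
    qed
    have "deriv (\<lambda>u. cmod (f u)) s = (SOME D. False)"
      unfolding deriv_def using nd by simp
    then show ?thesis using True False' by (simp add: DC_def)
  qed
qed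


definition dphi :: "((real^'m) \<times> (real^'m)) \<Rightarrow> real \<Rightarrow> complex" where
  "dphi z s = 1 / (2 * of_nat CARD('m)) *
     (\<Sum>i\<in>UNIV. (\<i> * of_real (fst z $ i)) * exp (\<i> * of_real (s * fst z $ i))
               + (\<i> * of_real (snd z $ i)) * exp (\<i> * of_real (s * snd z $ i)))"

lemma phi_has_vd:
  fixes z :: "(real^'m) \<times> (real^'m)"
  shows "(phi_emp z has_vector_derivative dphi z s) (at s)"
proof -
  define F where "F w = 1 / (2 * of_nat CARD('m)) *
     (\<Sum>i\<in>UNIV. exp (\<i> * (w * of_real (fst z $ i))) + exp (\<i> * (w * of_real (snd z $ i))))" for w :: complex
  have "(F has_field_derivative dphi z s) (at (of_real s))"
    unfolding F_def dphi_def
    by (auto intro!: derivative_eq_intros simp: algebra_simps)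
  then have "((\<lambda>x. F (of_real x)) has_vector_derivative dphi z s) (at s)"
    by (rule has_vector_derivative_real_field)
  moreover have "(\<lambda>x. F (of_real x)) = phi_emp z"
    by (rule ext) (simp add: F_def phi_emp_def mult.commute)
  ultimately show ?thesis by simp
qed

lemma phi_cont: "continuous_on UNIV (\<lambda>x::real \<times> ((real^'m) \<times> (real^'m)). phi_emp (snd x) (fst x))"
  unfolding phi_emp_def by (intro continuous_intros)

lemma dphi_cont: "continuous_on UNIV (\<lambda>x::real \<times> ((real^'m) \<times> (real^'m)). dphi (snd x) (fst x))"
  unfolding dphi_def by (intro continuous_intros)


lemma s_hat_meas: "(s_hat \<gamma> :: ((real^'m) \<times> (real^'m)) \<Rightarrow> real) \<in> borel_measurable borel"
proof -
  define L where "L = ln (2 * real CARD('m))"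
  define c where "c = (2 * real CARD('m)) powr (- \<gamma>)"
  define Cl where "Cl = {x :: real \<times> ((real^'m) \<times> (real^'m)). cmod (phi_emp (snd x) (fst x)) = c}"
  define C where "C z = {s \<in> {0..L}. cmod (phi_emp z s) = c}" for z :: "(real^'m) \<times> (real^'m)"
  have sC: "s_hat \<gamma> z = Inf (C z)" for z :: "(real^'m) \<times> (real^'m)" unfolding s_hat_def C_def L_def c_def by simp
  have clCl: "closed Cl" unfolding Cl_def
    by (rule closed_Collect_eq[OF continuous_on_norm[OF phi_cont] continuous_on_const])
  have clC: "closed (C z)" for z
  proof -
    have "C z = {0..L} \<inter> {s. cmod (phi_emp z s) = c}" unfolding C_def by auto
    moreover have "continuous_on UNIV (\<lambda>s. phi_emp z s)"
      using continuous_on_compose2[OF phi_cont, of UNIV "\<lambda>s. (s, z)"]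
      by (simp add: continuous_on_Pair continuous_on_id continuous_on_const)
    then have "closed {s. cmod (phi_emp z s) = c}"
      by (rule closed_Collect_eq[OF continuous_on_norm continuous_on_const])
    ultimately show ?thesis by auto
  qed
  have bC: "bdd_below (C z)" for z unfolding C_def by (rule bdd_belowI[of _ 0]) auto
  define A where "A b = {z. \<exists>s. s \<in> {0..b} \<and> (s, z) \<in> Cl}" for b
  have Aclosed: "closed (A b)" for b unfolding A_def
    by (rule closed_compact_projection[OF compact_Icc clCl])
  have key: "{z :: (real^'m) \<times> (real^'m). s_hat \<gamma> z \<le> a} = A (min a L) \<union> (if Inf ({}::real set) \<le> a then - A L else {})" (is "?L = ?R") for a
  proof (intro set_eqI iffI)
    fix z assume z: "z \<in> ?L"
    show "z \<in> ?R"
    proof (cases "C z = {}")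
      case True
      then have "z \<notin> A L" unfolding A_def C_def Cl_def by auto
      then show ?thesis using z True sC by auto
    next
      case False
      then have "Inf (C z) \<in> C z" using closed_contains_Inf[OF False bC clC] by simp
      then show ?thesis using z sC unfolding A_def C_def Cl_def by auto
    qed
  next
    fix z assume z: "z \<in> ?R"
    show "z \<in> ?L"
    proof (cases "z \<in> A (min a L)")
      case True
      then obtain s where s: "s \<in> {0..min a L}" "(s, z) \<in> Cl" unfolding A_def by auto
      then have "s \<in> C z" unfolding C_def Cl_def by auto
      then have "Inf (C z) \<le> s" by (rule cInf_lower[OF _ bC])
      then show ?thesis using s sC by auto
    next
      case False
      then have "z \<notin> A L" and le: "Inf ({}::real set) \<le> a" using z by (auto split: if_splits)
      then have "C z = {}" unfolding A_def C_def Cl_def by auto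
      then show ?thesis using le sC by auto
    qed
  qed
  show ?thesis
    unfolding borel_measurable_iff_le
  proof
    fix a
    have "A (min a L) \<union> (if Inf ({}::real set) \<le> a then - A L else {}) \<in> sets borel"
      using Aclosed by (auto intro!: borel_closed sets.Un sets.compl_sets)
    moreover have "{w \<in> space (borel :: ((real^'m) \<times> (real^'m)) measure). s_hat \<gamma> w \<le> a} = A (min a L) \<union> (if Inf ({}::real set) \<le> a then - A L else {})"
      using key[of a] by simp
    ultimately show "{w \<in> space (borel :: ((real^'m) \<times> (real^'m)) measure). s_hat \<gamma> w \<le> a} \<in> sets borel"
      by simp
  qed
qed


lemma phiS_meas: "(\<lambda>z::(real^'m) \<times> (real^'m). phi_emp z (s_hat \<gamma> z)) \<in> borel_measurable borel"
proof -
  have "(\<lambda>z::(real^'m) \<times> (real^'m). (s_hat \<gamma> z, z)) \<in> borel_measurable borel"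
    using s_hat_meas by measurable
  from measurable_compose[OF this borel_measurable_continuous_onI[OF phi_cont]]
  show ?thesis by simp
qed

lemma dphiS_meas: "(\<lambda>z::(real^'m) \<times> (real^'m). dphi z (s_hat \<gamma> z)) \<in> borel_measurable borel"
proof -
  have "(\<lambda>z::(real^'m) \<times> (real^'m). (s_hat \<gamma> z, z)) \<in> borel_measurable borel"
    using s_hat_meas by measurable
  from measurable_compose[OF this borel_measurable_continuous_onI[OF dphi_cont]]
  show ?thesis by simp
qed

lemma DC_meas: "(\<lambda>x. DC (fst x) (snd x)) \<in> borel_measurable borel"
proof -
  have "open {x::complex \<times> complex. fst x \<noteq> 0}" by (intro open_Collect_neq continuous_intros)
  then have c1: "{x::complex \<times> complex. fst x \<noteq> 0} \<inter> space borel \<in> sets borel"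
    by (simp add: borel_open)
  have "closed {x::complex \<times> complex. snd x = 0}" by (intro closed_Collect_eq continuous_intros)
  then have c2: "{x::complex \<times> complex. snd x = 0} \<inter> space borel \<in> sets borel"
    by (simp add: borel_closed)
  have i2: "(\<lambda>x::complex \<times> complex. if x \<in> {x. snd x = 0} then 0 else (SOME D::real. False)) \<in> borel_measurable borel"
    by (rule measurable_If_set[OF _ _ c2]) simp_all
  have "(\<lambda>x::complex \<times> complex. if x \<in> {x. fst x \<noteq> 0} then snd x \<bullet> sgn (fst x)
          else (if x \<in> {x. snd x = 0} then 0 else (SOME D::real. False))) \<in> borel_measurable borel"
  proof (rule measurable_If_set[OF _ i2 c1])
    show "(\<lambda>x::complex \<times> complex. snd x \<bullet> sgn (fst x)) \<in> borel_measurable borel"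
      using snd_borel measurable_compose[OF fst_borel borel_measurable_sgn]
      by (rule borel_measurable_inner)
  qed
  then show ?thesis unfolding DC_def mem_Collect_eq .
qed

lemma sigma2_eq: "sigma2_hat \<gamma> z = - DC (phi_emp z (s_hat \<gamma> z)) (dphi z (s_hat \<gamma> z)) / (s_hat \<gamma> z * cmod (phi_emp z (s_hat \<gamma> z)))"
  unfolding sigma2_hat_def Let_def deriv_cmod[OF phi_has_vd] by simp

lemma mu_eq: "mu_hat \<gamma> z = (let p = phi_emp z (s_hat \<gamma> z); p' = dphi z (s_hat \<gamma> z) in
     (Re p * Im p' - Re p' * Im p) / (cmod p)\<^sup>2)"
  unfolding mu_hat_def Let_def vector_derivative_at[OF phi_has_vd] by simp

lemma sigma2_meas: "(sigma2_hat \<gamma> :: (real^'m) \<times> (real^'m) \<Rightarrow> real) \<in> borel_measurable borel"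
proof -
  have pair: "(\<lambda>z::(real^'m) \<times> (real^'m). (phi_emp z (s_hat \<gamma> z), dphi z (s_hat \<gamma> z))) \<in> borel_measurable borel"
    using phiS_meas[of \<gamma>] dphiS_meas[of \<gamma>] by measurable
  have "(\<lambda>z::(real^'m) \<times> (real^'m). DC (phi_emp z (s_hat \<gamma> z)) (dphi z (s_hat \<gamma> z))) \<in> borel_measurable borel"
    using measurable_compose[OF pair DC_meas] by simp
  then show ?thesis unfolding sigma2_eq[abs_def]
    using phiS_meas s_hat_meas by measurable
qed

lemma mu_meas: "(mu_hat \<gamma> :: (real^'m) \<times> (real^'m) \<Rightarrow> real) \<in> borel_measurable borel"
  unfolding mu_eq[abs_def] Let_def using phiS_meas dphiS_meas by measurable


lemma vec_meas:
  fixes f :: "'m::finite \<Rightarrow> 'a \<Rightarrow> real"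
  assumes "\<And>j. f j \<in> borel_measurable N"
  shows "(\<lambda>x. \<chi> j. f j x) \<in> borel_measurable N"
  apply (subst borel_measurable_euclidean_space)
  using assms by (auto simp: Basis_vec_def cart_eq_inner_axis[symmetric])

lemma m_ffi[measurable]: "(\<lambda>x::((real^'m) \<times> (real^'m)) \<times> real. fst (fst x) $ i) \<in> borel_measurable borel"
  by (rule borel_measurable_continuous_onI) (simp add: continuous_on_component continuous_on_fst continuous_on_id)
lemma m_sfi[measurable]: "(\<lambda>x::((real^'m) \<times> (real^'m)) \<times> real. snd (fst x) $ i) \<in> borel_measurable borel"
  by (rule borel_measurable_continuous_onI) (simp add: continuous_on_component continuous_on_fst continuous_on_snd continuous_on_id)
lemma m_s[measurable]: "(\<lambda>x::((real^'m) \<times> (real^'m)) \<times> real. snd x) \<in> borel_measurable borel"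
  by (rule snd_borel)

lemma g_meas:
  fixes K :: "real \<Rightarrow> real" and hmix h0 :: "((real^'m) \<times> (real^'m)) \<Rightarrow> real"
  assumes Km: "K \<in> borel_measurable borel" and hm: "hmix \<in> borel_measurable borel"
    and h0m: "h0 \<in> borel_measurable borel"
  shows "(\<lambda>x::((real^'m) \<times> (real^'m)) \<times> real. g_hat e K hmix h0 \<gamma> (fst x) (snd x)) \<in> borel_measurable borel"
proof -
  note Km[measurable]
  have hmf[measurable]: "(\<lambda>x::((real^'m) \<times> (real^'m)) \<times> real. hmix (fst x)) \<in> borel_measurable borel"
    using measurable_compose[OF fst_borel hm] .
  have fmix[measurable]: "(\<lambda>x::((real^'m) \<times> (real^'m)) \<times> real. fmix_hat K hmix (fst x) (snd x)) \<in> borel_measurable borel"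
    unfolding fmix_hat_def Kh_def by measurable
  have tt: "(\<lambda>x::((real^'m) \<times> (real^'m)) \<times> real. Ttilde0 (fst x)) \<in> borel_measurable borel"
    unfolding Ttilde0_def by (rule vec_meas) measurable
  have tti[measurable]: "(\<lambda>x::((real^'m) \<times> (real^'m)) \<times> real. Ttilde0 (fst x) $ i) \<in> borel_measurable borel" for i
    using measurable_compose[OF tt borel_measurable_nth] .
  have h0t[measurable]: "(\<lambda>x::((real^'m) \<times> (real^'m)) \<times> real. h0 (Ttilde0 (fst x), - Ttilde0 (fst x))) \<in> borel_measurable borel"
  proof -
    have "(\<lambda>x::((real^'m) \<times> (real^'m)) \<times> real. (Ttilde0 (fst x), - Ttilde0 (fst x))) \<in> borel_measurable borel"
      using tt by measurable
    from measurable_compose[OF this h0m] show ?thesis .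
  qed
  have kn[measurable]: "(\<lambda>x::((real^'m) \<times> (real^'m)) \<times> real. f0_KN K h0 (fst x) (snd x)) \<in> borel_measurable borel"
    unfolding f0_KN_def Kh_def Let_def by measurable
  have mu[measurable]: "(\<lambda>x::((real^'m) \<times> (real^'m)) \<times> real. mu_hat \<gamma> (fst x)) \<in> borel_measurable borel"
    using measurable_compose[OF fst_borel mu_meas] .
  have sg[measurable]: "(\<lambda>x::((real^'m) \<times> (real^'m)) \<times> real. sigma2_hat \<gamma> (fst x)) \<in> borel_measurable borel"
    using measurable_compose[OF fst_borel sigma2_meas] .
  have jc[measurable]: "(\<lambda>x::((real^'m) \<times> (real^'m)) \<times> real. f0_JC \<gamma> (fst x) (snd x)) \<in> borel_measurable borel"
    unfolding f0_JC_def normal_density_def by measurable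
  show ?thesis
    unfolding g_hat_def f0_hat_def by (cases e) simp_all
qed


lemma UU_meas:
  fixes K :: "real \<Rightarrow> real" and hmix h0 :: "((real^'m) \<times> (real^'m)) \<Rightarrow> real"
  assumes Km: "K \<in> borel_measurable borel" and hm: "hmix \<in> borel_measurable borel"
    and h0m: "h0 \<in> borel_measurable borel"
  shows "UU e K hmix h0 \<gamma> \<in> borel_measurable borel"
proof -
  note G = g_meas[OF Km hm h0m, of e \<gamma>]
  have fj: "(\<lambda>z::(real^'m) \<times> (real^'m). fst z $ j) \<in> borel_measurable borel" for j
    using measurable_compose[OF fst_borel borel_measurable_nth] .
  have sj: "(\<lambda>z::(real^'m) \<times> (real^'m). snd z $ j) \<in> borel_measurable borel" for j
    using measurable_compose[OF snd_borel borel_measurable_nth] .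
  have a: "(\<lambda>z. g_hat e K hmix h0 \<gamma> z (fst z $ j)) \<in> borel_measurable borel" for j
    using measurable_compose[OF borel_measurable_Pair[OF measurable_ident_sets[OF refl] fj] G] by simp
  have b: "(\<lambda>z. g_hat e K hmix h0 \<gamma> z (snd z $ j)) \<in> borel_measurable borel" for j
    using measurable_compose[OF borel_measurable_Pair[OF measurable_ident_sets[OF refl] sj] G] by simp
  show ?thesis unfolding UU_def
    by (intro borel_measurable_Pair vec_meas a b)
qed

lemma sw_fst[simp]: "fst (swap_at i z) $ j = (if j = i then snd z $ j else fst z $ j)"
  by (simp add: swap_at_def)
lemma sw_snd[simp]: "snd (swap_at i z) $ j = (if j = i then fst z $ j else snd z $ j)"
  by (simp add: swap_at_def)

lemma sum_swap:
  fixes F :: "real \<Rightarrow> real \<Rightarrow> 'b::comm_monoid_add"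
  assumes "\<And>a b. F a b = F b a"
  shows "(\<Sum>j\<in>UNIV. F (fst (swap_at i z) $ j) (snd (swap_at i z) $ j)) = (\<Sum>j\<in>UNIV. F (fst z $ j) (snd z $ j))"
  by (rule sum.cong) (auto simp: assms)

lemma perm_swap:
  fixes i :: "'m::finite" and z :: "(real^'m) \<times> (real^'m)"
  assumes "perm_invariant h"
  shows "h (swap_at i z) = h z"
proof -
  have p: "Transposition.transpose (i, True) (i, False) permutes (UNIV :: ('m \<times> bool) set)"
    by (rule permutes_swap_id) auto
  have "of_entries (entries z \<circ> Transposition.transpose (i, True) (i, False)) = swap_at i z"
    by (auto simp: of_entries_def entries_def swap_at_def vec_eq_iff Transposition.transpose_def)
  with assms p show ?thesis unfolding perm_invariant_def by metis
qed

lemma fmix_swap: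
  assumes "perm_invariant hmix"
  shows "fmix_hat K hmix (swap_at i z) t = fmix_hat K hmix z t"
  unfolding fmix_hat_def perm_swap[OF assms]
  using sum_swap[of "\<lambda>a b. Kh K (hmix z) (t - a) + Kh K (hmix z) (t - b)" i z]
  by (simp add: add.commute)

lemma phi_swap: "phi_emp (swap_at i z) = phi_emp z"
  unfolding phi_emp_def
  using sum_swap[of "\<lambda>a b. exp (\<i> * complex_of_real (s * a)) + exp (\<i> * complex_of_real (s * b))" i z for s]
  by (simp add: add.commute fun_eq_iff)

lemma JC_swap: "f0_JC \<gamma> (swap_at i z) t = f0_JC \<gamma> z t"
  by (simp add: f0_JC_def mu_hat_def sigma2_hat_def s_hat_def phi_swap)

lemma tt_swap: "Ttilde0 (swap_at i z) = Ttilde0 z \<or>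
   Ttilde0 (swap_at i z) = (\<chi> j. if j = i then - Ttilde0 z $ j else Ttilde0 z $ j)"
proof (cases "\<bar>fst z $ i\<bar> = \<bar>snd z $ i\<bar>")
  case True
  then have "fst z $ i = snd z $ i \<or> fst z $ i = - snd z $ i" by (auto simp: abs_eq_iff)
  then show ?thesis
  proof
    assume "fst z $ i = snd z $ i" then show ?thesis
      by (auto simp: vec_eq_iff Ttilde0_def)
  next
    assume "fst z $ i = - snd z $ i" then show ?thesis using True
      by (auto simp: vec_eq_iff Ttilde0_def)
  qed
next
  case False
  then show ?thesis by (auto simp: vec_eq_iff Ttilde0_def)
qed

lemma KN_swap:
  fixes i :: "'m::finite" and z :: "(real^'m) \<times> (real^'m)"
  assumes h0i: "perm_invariant h0"
  shows "f0_KN K h0 (swap_at i z) t = f0_KN K h0 z t"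
proof -
  define tt where "tt = Ttilde0 z"
  define nt where "nt = (\<chi> j. if j = i then - tt $ j else tt $ j)"
  have p: "Transposition.transpose (i, True) (i, False) permutes (UNIV :: ('m \<times> bool) set)"
    by (rule permutes_swap_id) auto
  have "of_entries (entries (tt, -tt) \<circ> Transposition.transpose (i, True) (i, False)) = (nt, -nt)"
    by (auto simp: of_entries_def entries_def nt_def vec_eq_iff Transposition.transpose_def)
  then have hh: "h0 (nt, -nt) = h0 (tt, -tt)"
    using h0i p unfolding perm_invariant_def by metis
  have S: "(\<Sum>j\<in>UNIV. Kh K h (t - nt $ j)) + (\<Sum>j\<in>UNIV. Kh K h (t + nt $ j))
         = (\<Sum>j\<in>UNIV. Kh K h (t - tt $ j)) + (\<Sum>j\<in>UNIV. Kh K h (t + tt $ j))" for h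
  proof -
    have "(\<Sum>j\<in>UNIV. Kh K h (t - nt $ j)) + (\<Sum>j\<in>UNIV. Kh K h (t + nt $ j))
        = (\<Sum>j\<in>UNIV. Kh K h (t - nt $ j) + Kh K h (t + nt $ j))" by (simp add: sum.distrib)
    also have "\<dots> = (\<Sum>j\<in>UNIV. Kh K h (t - tt $ j) + Kh K h (t + tt $ j))"
      by (rule sum.cong) (auto simp: nt_def add.commute)
    also have "\<dots> = (\<Sum>j\<in>UNIV. Kh K h (t - tt $ j)) + (\<Sum>j\<in>UNIV. Kh K h (t + tt $ j))"
      by (simp add: sum.distrib)
    finally show ?thesis .
  qed
  from tt_swap[of i z] show ?thesis
  proof
    assume "Ttilde0 (swap_at i z) = Ttilde0 z" then show ?thesis by (simp add: f0_KN_def)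
  next
    assume "Ttilde0 (swap_at i z) = (\<chi> j. if j = i then - Ttilde0 z $ j else Ttilde0 z $ j)"
    then have "Ttilde0 (swap_at i z) = nt" unfolding nt_def tt_def .
    then show ?thesis unfolding f0_KN_def Let_def using hh S by (simp add: tt_def)
  qed
qed

lemma g_swap:
  assumes "perm_invariant hmix" "perm_invariant h0"
  shows "g_hat e K hmix h0 \<gamma> (swap_at i z) t = g_hat e K hmix h0 \<gamma> z t"
  unfolding g_hat_def f0_hat_def fmix_swap[OF assms(1)]
  by (cases e) (simp_all add: KN_swap[OF assms(2)] JC_swap)

lemma UU_swap:
  assumes "perm_invariant hmix" "perm_invariant h0"
  shows "UU e K hmix h0 \<gamma> (swap_at i z) = swap_at i (UU e K hmix h0 \<gamma> z)"
  unfolding UU_def g_swap[OF assms]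
  by (auto simp: swap_at_def vec_eq_iff)


lemma swap_meas: "(swap_at i :: ((real^'m) \<times> (real^'m)) \<Rightarrow> _) \<in> borel_measurable borel"
proof -
  have fj: "(\<lambda>z::(real^'m) \<times> (real^'m). fst z $ j) \<in> borel_measurable borel" for j
    using measurable_compose[OF fst_borel borel_measurable_nth] .
  have sj: "(\<lambda>z::(real^'m) \<times> (real^'m). snd z $ j) \<in> borel_measurable borel" for j
    using measurable_compose[OF snd_borel borel_measurable_nth] .
  have a: "(\<lambda>z::(real^'m) \<times> (real^'m). if j = i then snd z $ j else fst z $ j) \<in> borel_measurable borel" for j
    using fj sj by (cases "j = i") simp_all
  have b: "(\<lambda>z::(real^'m) \<times> (real^'m). if j = i then fst z $ j else snd z $ j) \<in> borel_measurable borel" for j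
    using fj sj by (cases "j = i") simp_all
  show ?thesis unfolding swap_at_def
    by (intro borel_measurable_Pair vec_meas a b)
qed

theorem proposition2:
  fixes M :: "'a measure" and T T0 :: "'a \<Rightarrow> real^'m" and H0 :: "'m set"
    and K :: "real \<Rightarrow> real" and hmix h0 :: "((real^'m) \<times> (real^'m)) \<Rightarrow> real"
    and \<gamma> :: real and e :: est
  assumes "prob_space M"
    and "T \<in> borel_measurable M" and "T0 \<in> borel_measurable M"
    and exch: "\<forall>i\<in>H0. distr M borel (\<lambda>\<omega>. (T \<omega>, T0 \<omega>))
                      = distr M borel (\<lambda>\<omega>. swap_at i (T \<omega>, T0 \<omega>))"
    and K_sym: "\<forall>t. K (- t) = K t"
    and K_int: "integrable lborel K" and K_one: "(\<integral>t. K t \<partial>lborel) = 1"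
    and K_mean: "integrable lborel (\<lambda>t. t * K t)" "(\<integral>t. t * K t \<partial>lborel) = 0"
    and K_var: "integrable lborel (\<lambda>t. t\<^sup>2 * K t)"
    and hmix_inv: "perm_invariant hmix" and hmix_meas: "hmix \<in> borel_measurable borel"
    and h0_inv: "perm_invariant h0" and h0_meas: "h0 \<in> borel_measurable borel"
    and "0 < \<gamma>" and "\<gamma> < 1/2"
  shows "\<forall>i\<in>H0. distr M borel (\<lambda>\<omega>. UU e K hmix h0 \<gamma> (T \<omega>, T0 \<omega>))
              = distr M borel (\<lambda>\<omega>. swap_at i (UU e K hmix h0 \<gamma> (T \<omega>, T0 \<omega>)))"
proof
  fix i assume i: "i \<in> H0"
  let ?U = "UU e K hmix h0 \<gamma>"
  have Km: "K \<in> borel_measurable borel"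
    using borel_measurable_integrable[OF K_int] by simp
  have Z: "(\<lambda>\<omega>. (T \<omega>, T0 \<omega>)) \<in> borel_measurable M"
    using assms(2,3) by (rule borel_measurable_Pair)
  have SZ: "(\<lambda>\<omega>. swap_at i (T \<omega>, T0 \<omega>)) \<in> borel_measurable M"
    using measurable_compose[OF Z swap_meas] .
  have U: "?U \<in> borel_measurable borel" by (rule UU_meas[OF Km hmix_meas h0_meas])
  have "distr M borel (\<lambda>\<omega>. ?U (T \<omega>, T0 \<omega>)) = distr (distr M borel (\<lambda>\<omega>. (T \<omega>, T0 \<omega>))) borel ?U"
    using distr_distr[OF U Z] by (simp add: comp_def)
  also have "\<dots> = distr (distr M borel (\<lambda>\<omega>. swap_at i (T \<omega>, T0 \<omega>))) borel ?U"
    using exch i by simp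
  also have "\<dots> = distr M borel (\<lambda>\<omega>. ?U (swap_at i (T \<omega>, T0 \<omega>)))"
    using distr_distr[OF U SZ] by (simp add: comp_def)
  finally show "distr M borel (\<lambda>\<omega>. ?U (T \<omega>, T0 \<omega>)) = distr M borel (\<lambda>\<omega>. swap_at i (?U (T \<omega>, T0 \<omega>)))"
    by (simp add: UU_swap[OF hmix_inv h0_inv])
qed

end
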